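(* Let $\mathcal{C}$ be a cograph on a point set $\mathcal{P}$ whose edge values $\mathcal{C}(P,Q)$ are sets, such that (i) for all distinct points $P,Q,R$, with $a=\mathcal{C}(P,Q)$, $b=\mathcal{C}(Q,R)$, $c=\mathcal{C}(R,P)$, one has $a\cap b=b\cap c=a\cap c$; and (ii) for all distinct points $P,Q,R,S$, $\mathcal{C}(P,Q)\cap\mathcal{C}(R,S)=\mathcal{C}(Q,R)\cap\mathcal{C}(S,P)$. For each $P\in\mathcal{P}$ choose a new element $P_o$, the $P_o$ being pairwise distinct and not belonging to any edge set, and define $P'=\{P_o\}\cup\bigcup_{Q\in\mathcal{P},\,Q\neq P}\mathcal{C}(P,Q)$. Then the sets $P'$ ($P\in\mathcal{P}$) are pairwise distinct and $P'\cap S'=\mathcal{C}(P,S)$ for all distinct $P,S\in\mathcal{P}$; that is, $\{P':P\in\mathcal{P}\}$ is an intersection cograph having the edges of $\mathcal{C}$.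
   Context: A cograph is a function $\mathcal{C}$ assigning to each unordered pair $\{P,Q\}$ of distinct elements of a point set $\mathcal{P}$ a value $\mathcal{C}(P,Q)$. An intersection cograph has as points distinct sets, with the edge between $P$ and $Q$ equal to $P\cap Q$. *)

theory Defs
  imports Main
begin

text \<open>A cograph on a point set Ps with set-valued edges is modelled as a function
  C on unordered pairs, i.e. C {P,Q} is the edge value of the pair {P,Q}.\<close>

definition extended_point :: "'p set \<Rightarrow> ('p set \<Rightarrow> 'a set) \<Rightarrow> ('p \<Rightarrow> 'a) \<Rightarrow> 'p \<Rightarrow> 'a set" where
  "extended_point Ps C po P = insert (po P) (\<Union>Q\<in>Ps - {P}. C {P, Q})"

end

theory Submission
  imports Defs
begin

theorem proposition4p1p3:
  fixes Ps :: "'p set" and C :: "'p set \<Rightarrow> 'a set" and po :: "'p \<Rightarrow> 'a"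
  assumes tri: "\<And>P Q R. \<lbrakk>P \<in> Ps; Q \<in> Ps; R \<in> Ps; P \<noteq> Q; Q \<noteq> R; P \<noteq> R\<rbrakk> \<Longrightarrow>
      C {P, Q} \<inter> C {Q, R} = C {Q, R} \<inter> C {R, P} \<and> C {Q, R} \<inter> C {R, P} = C {P, Q} \<inter> C {R, P}"
    and quad: "\<And>P Q R S. \<lbrakk>P \<in> Ps; Q \<in> Ps; R \<in> Ps; S \<in> Ps;
      P \<noteq> Q; P \<noteq> R; P \<noteq> S; Q \<noteq> R; Q \<noteq> S; R \<noteq> S\<rbrakk> \<Longrightarrow>
      C {P, Q} \<inter> C {R, S} = C {Q, R} \<inter> C {S, P}"
    and o_inj: "inj_on po Ps"
    and o_new: "\<And>P Q R. \<lbrakk>P \<in> Ps; Q \<in> Ps; R \<in> Ps; Q \<noteq> R\<rbrakk> \<Longrightarrow> po P \<notin> C {Q, R}"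
  shows "inj_on (extended_point Ps C po) Ps \<and>
    (\<forall>P\<in>Ps. \<forall>S\<in>Ps. P \<noteq> S \<longrightarrow>
       extended_point Ps C po P \<inter> extended_point Ps C po S = C {P, S})"
proof -
  have key: "extended_point Ps C po P \<inter> extended_point Ps C po S = C {P, S}"
    if P: "P \<in> Ps" and S: "S \<in> Ps" and PS: "P \<noteq> S" for P S
  proof
    show "C {P, S} \<subseteq> extended_point Ps C po P \<inter> extended_point Ps C po S"
      using P S PS by (auto simp: extended_point_def insert_commute)
  next
    show "extended_point Ps C po P \<inter> extended_point Ps C po S \<subseteq> C {P, S}"
    proof
      fix x assume x: "x \<in> extended_point Ps C po P \<inter> extended_point Ps C po S"
      have pne: "po P \<noteq> po S" using o_inj P S PS by (auto simp: inj_on_def)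
      have xP: "x \<noteq> po P \<Longrightarrow> \<exists>Q\<in>Ps - {P}. x \<in> C {P, Q}" using x by (auto simp: extended_point_def)
      have xS: "x \<noteq> po S \<Longrightarrow> \<exists>R\<in>Ps - {S}. x \<in> C {S, R}" using x by (auto simp: extended_point_def)
      have n1: "x \<noteq> po P"
      proof
        assume "x = po P"
        with x pne have "\<exists>R\<in>Ps - {S}. po P \<in> C {S, R}" by (auto simp: extended_point_def)
        then show False using o_new P S by blast
      qed
      have n2: "x \<noteq> po S"
      proof
        assume "x = po S"
        with x pne have "\<exists>Q\<in>Ps - {P}. po S \<in> C {P, Q}" by (auto simp: extended_point_def)
        then show False using o_new P S by blast
      qed
      obtain Q where Q: "Q \<in> Ps" "Q \<noteq> P" "x \<in> C {P, Q}" using xP n1 by blast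
      obtain R where R: "R \<in> Ps" "R \<noteq> S" "x \<in> C {S, R}" using xS n2 by blast
      show "x \<in> C {P, S}"
      proof (cases "Q = S")
        case True thus ?thesis using Q by simp
      next
        case QS: False
        show ?thesis
        proof (cases "R = P")
          case True thus ?thesis using R by (simp add: insert_commute)
        next
          case RP: False
          show ?thesis
          proof (cases "Q = R")
            case True
            have "C {P, Q} \<inter> C {Q, S} = C {Q, S} \<inter> C {S, P} \<and> C {Q, S} \<inter> C {S, P} = C {P, Q} \<inter> C {S, P}"
              using tri[OF P Q(1) S] Q(2) QS PS by auto
            moreover have "x \<in> C {P, Q} \<inter> C {Q, S}" using Q R True by (auto simp: insert_commute)
            ultimately have "x \<in> C {S, P}" by blast
            thus ?thesis by (simp add: insert_commute)
          next
            case False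
            have "C {P, Q} \<inter> C {R, S} = C {Q, R} \<inter> C {S, P}"
              using quad[OF P Q(1) R(1) S] Q(2) QS PS RP False R(2) by auto
            moreover have "x \<in> C {P, Q} \<inter> C {R, S}" using Q R by (auto simp: insert_commute)
            ultimately have "x \<in> C {S, P}" by blast
            thus ?thesis by (simp add: insert_commute)
          qed
        qed
      qed
    qed
  qed
  have inj: "inj_on (extended_point Ps C po) Ps"
  proof (rule inj_onI, rule ccontr)
    fix P S assume P: "P \<in> Ps" and S: "S \<in> Ps" and eq: "extended_point Ps C po P = extended_point Ps C po S" and PS: "P \<noteq> S"
    have "po P \<in> extended_point Ps C po P" by (simp add: extended_point_def)
    hence "po P \<in> extended_point Ps C po S" using eq by simp
    moreover have "po P \<noteq> po S" using o_inj P S PS by (auto simp: inj_on_def)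
    ultimately have "\<exists>R\<in>Ps - {S}. po P \<in> C {S, R}" by (auto simp: extended_point_def)
    then show False using o_new P S by blast
  qed
  show ?thesis using inj key by blast
qed

end
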